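(* Let $N\ge2$, $\Omega=\mathbb{R}^{N-1}\times(0,\infty)$, $D=\overline{\Omega}\times\overline{\Omega}\times(0,\infty)$, and fix $\epsilon>0$, $\delta>0$, $k>0$. Let \[ H(x,y,t):=-2\int_0^t\Gamma_{N-1}\!\left(x'-y',\frac{t-\tau}{\epsilon}+\frac{k}{\delta}\tau\right)\partial_{\xi}\Gamma_1\!\left(x_N+y_N+\frac{\tau}{\delta},\frac{t-\tau}{\epsilon}\right)d\tau,\quad (x,y,t)\in D. \] Set $\Lambda:=\max\{\delta,k\epsilon\}$, $\lambda:=\min\{\delta,k\epsilon\}$. Then there exists $C>0$ such that for all $(x,y,t)\in D$, \[ C^{-1}\underline{h}(x,y,t)\,\Gamma_{N-1}\!\left(x'-y',\frac{\lambda}{\epsilon\delta}t\right)\le H(x,y,t)\le C\,\overline{h}(x,y,t)\,\Gamma_{N-1}\!\left(x'-y',\frac{\Lambda}{\epsilon\delta}t\right), \] where $\overline h=\underline h=1$ on $D_1$; $\overline h=\Gamma_1(x_N+y_N,t/\epsilon)$ and $\underline h=\Gamma_1(x_N+y_N,t/(2\epsilon))$ on $D_2\cup D_4$; $\overline h=(x_N+y_N+t/\delta)\Gamma_1(x_N+y_N,t/\epsilon)$ and $\underline h=(x_N+y_N+t/\delta)\Gamma_1(x_N+y_N,t/(2\epsilon))$ on $D_3$. Here $D_1=\{(x,y,t)\in D:\epsilon(x_N+y_N)^2<6t,\ t<12\delta^2/\epsilon\}$, $D_2=\{(x,y,t)\in D:\epsilon(x_N+y_N)^2<6t,\ t\ge12\delta^2/\epsilon\}$,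 $D_3=\{(x,y,t)\in D:\epsilon(x_N+y_N)^2\ge6t,\ x_N+y_N+t/\delta<\delta/\epsilon\}$, $D_4=\{(x,y,t)\in D:\epsilon(x_N+y_N)^2\ge6t,\ x_N+y_N+t/\delta\ge\delta/\epsilon\}$.
   Context: Points are written $x=(x',x_N)$ with $x'\in\mathbb{R}^{N-1}$, $x_N\ge0$. For $d\ge1$, $\Gamma_d(x,t)=(4\pi t)^{-d/2}\exp(-|x|^2/(4t))$ on $\mathbb{R}^d\times(0,\infty)$; $\partial_\xi\Gamma_1(\xi,s)$ is the derivative of $\Gamma_1$ in its spatial variable. *)

theory Defs
  imports "HOL-Analysis.Analysis"
begin

text \<open>Heat kernel in dimension d, evaluated at a point given by its Euclidean norm.\<close>
definition Gamma_d :: "nat \<Rightarrow> real \<Rightarrow> real \<Rightarrow> real" where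
  "Gamma_d d r t = (4 * pi * t) powr (- real d / 2) * exp (- (r^2) / (4 * t))"

text \<open>Heat kernel on R^(N-1), the space R^(N-1) being modelled as real^'n.\<close>
definition GammaV :: "real^'n \<Rightarrow> real \<Rightarrow> real" where
  "GammaV z t = Gamma_d CARD('n) (norm z) t"

definition Gamma1 :: "real \<Rightarrow> real \<Rightarrow> real" where
  "Gamma1 \<xi> t = Gamma_d 1 \<bar>\<xi>\<bar> t"

definition dGamma1 :: "real \<Rightarrow> real \<Rightarrow> real" where
  "dGamma1 \<xi> s = deriv (\<lambda>z. Gamma1 z s) \<xi>"

text \<open>Points of the closed half space: x = (x', x_N) with x_N \<ge> 0.\<close>
definition Hker :: "real \<Rightarrow> real \<Rightarrow> real \<Rightarrow> (real^'n) \<times> real \<Rightarrow> (real^'n) \<times> real \<Rightarrow> real \<Rightarrow> real" where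
  "Hker \<epsilon> \<delta> k x y t = -2 * integral {0..t} (\<lambda>\<tau>.
      GammaV (fst x - fst y) ((t - \<tau>) / \<epsilon> + (k / \<delta>) * \<tau>) *
      dGamma1 (snd x + snd y + \<tau> / \<delta>) ((t - \<tau>) / \<epsilon>))"

definition hup :: "real \<Rightarrow> real \<Rightarrow> real \<Rightarrow> real \<Rightarrow> real" where
  "hup \<epsilon> \<delta> s t =
    (if \<epsilon> * s^2 < 6 * t then (if t < 12 * \<delta>^2 / \<epsilon> then 1 else Gamma1 s (t / \<epsilon>))
     else (if s + t / \<delta> < \<delta> / \<epsilon> then (s + t / \<delta>) * Gamma1 s (t / \<epsilon>)
           else Gamma1 s (t / \<epsilon>)))"

definition hlow :: "real \<Rightarrow> real \<Rightarrow> real \<Rightarrow> real \<Rightarrow> real" where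
  "hlow \<epsilon> \<delta> s t =
    (if \<epsilon> * s^2 < 6 * t then (if t < 12 * \<delta>^2 / \<epsilon> then 1 else Gamma1 s (t / (2 * \<epsilon>)))
     else (if s + t / \<delta> < \<delta> / \<epsilon> then (s + t / \<delta>) * Gamma1 s (t / (2 * \<epsilon>))
           else Gamma1 s (t / (2 * \<epsilon>))))"

end

theory Submission
  imports Defs
begin

lemma powr_mhalf: "(x::real) > 0 \<Longrightarrow> x powr (- (1/2)) = 1 / sqrt x"
  by (simp add: powr_minus_divide powr_half_sqrt)

lemma sqrt4: "sqrt (4 * x) = 2 * sqrt x"
  by (simp add: real_sqrt_mult)

lemma Gamma1_eq: "s > 0 \<Longrightarrow> Gamma1 z s = exp (-(z^2)/(4* s)) / (2* sqrt pi* sqrt s)"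
  unfolding Gamma1_def Gamma_d_def
  by (simp add: powr_mhalf sqrt4 real_sqrt_mult mult.assoc)

lemma Gamma1_zero: "Gamma1 z 0 = 0"
  unfolding Gamma1_def Gamma_d_def by simp

lemma dGamma1_zero: "dGamma1 z 0 = 0"
  unfolding dGamma1_def Gamma1_zero by simp

lemma dGamma1_eq: assumes "s > 0" shows "dGamma1 z s = -(z/(2* s)) * Gamma1 z s"
proof -
  have e: "(\<lambda>z. Gamma1 z s) = (\<lambda>z. exp (-(z^2)/(4* s)) / (2* sqrt pi* sqrt s))"
    using Gamma1_eq[OF assms] by auto
  have "((\<lambda>z. exp (-(z^2)/(4* s)) / (2* sqrt pi* sqrt s)) has_real_derivative
      (-(z/(2* s)) * (exp (-(z^2)/(4* s)) / (2* sqrt pi* sqrt s)))) (at z)"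
    using assms by (auto intro!: derivative_eq_intros simp: field_simps)
  then show ?thesis unfolding dGamma1_def e using Gamma1_eq[OF assms]
    by (simp add: DERIV_imp_deriv)
qed


definition Gt :: "real \<Rightarrow> real" where "Gt w = exp (-(w^2)) / (1 + w)"

lemma Gt_deriv: assumes "w > -1"
  shows "(Gt has_real_derivative (-exp (-(w^2)) * (2*w^2 + 2*w + 1) / (1+w)^2)) (at w)"
proof -
  have "1 + w \<noteq> 0" using assms by simp
  then show ?thesis unfolding Gt_def[abs_def]
    by (auto intro!: derivative_eq_intros simp: field_simps power2_eq_square)
qed

lemma alg1: fixes \<epsilon> K E e P W X U S :: real
  assumes "\<epsilon> > 0" "(1+W)^2 > 0" "U > 0" "S > 0"
  shows "-\<epsilon> * K * E * ((-e * P / (1+W)^2) * (X / (4 * \<epsilon> * U * S))) = K * (E * e) * P * X / ((1+W)^2 * 4 * U * S)"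
  using assms by (simp add: field_simps)

lemma alg2: fixes K F P W X U S :: real
  assumes "(1+W)^2 > 0" "U > 0" "S > 0"
  shows "K * F * P * X / ((1+W)^2 * 4 * U * S) = K * (sqrt pi / 2) * P / (1+W)^2 * (X * F / (2 * sqrt pi * U * S))"
  using assms by (simp add: field_simps)

lemma alg3: fixes S X c U :: real
  assumes "S > 0" "X \<ge> 0" "c > 0" "U > 0"
  shows "1 / (1 + (X + 2 * c * U) / (2 * S)) = 2 * S / (2 * S + X + 2 * c * U)"
  using assms by (simp add: field_simps)

lemma sqrt_pi_bounds: "4/3 \<le> sqrt pi" "sqrt pi \<le> 2"
proof -
  show "4/3 \<le> sqrt pi" using pi_gt3 by (intro real_le_rsqrt) (simp add: power2_eq_square)
  have "sqrt pi \<le> sqrt 4" using pi_less_4 by (simp only: real_sqrt_le_iff)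
  then show "sqrt pi \<le> 2" by simp
qed

locale J1 =
  fixes \<epsilon> \<delta> a t :: real
  assumes eps: "\<epsilon> > 0" and del: "\<delta> > 0" and a0: "a \<ge> 0" and t0: "t > 0"
begin

definition "c = \<epsilon> / \<delta>"
definition "uu \<tau> = (t - \<tau>) / \<epsilon>"
definition "xi \<tau> = a + \<tau> / \<delta>"
definition "ww \<tau> = (xi \<tau> + 2 * c * uu \<tau>) / (2 * sqrt (uu \<tau>))"
definition "Phi K \<tau> = (if \<tau> < t then - \<epsilon> * K * exp ((a + t / \<delta>) * c) * Gt (ww \<tau>) else 0)"
definition "Fd \<tau> = -2 * dGamma1 (xi \<tau>) (uu \<tau>)"
definition "Kf K \<tau> = K * (sqrt pi / 2) * (2 * ww \<tau>^2 + 2 * ww \<tau> + 1) / (1 + ww \<tau>)^2"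
definition "Dd K \<tau> = (if \<tau> < t then Kf K \<tau> * Fd \<tau> else 0)"

lemma c_pos: "c > 0" using eps del by (simp add: c_def)
lemma uu_pos: "\<tau> < t \<Longrightarrow> uu \<tau> > 0" using eps by (simp add: uu_def)
lemma xi_nonneg: "0 \<le> \<tau> \<Longrightarrow> xi \<tau> \<ge> 0" using a0 del by (simp add: xi_def)
lemma ww_pos: "0 \<le> \<tau> \<Longrightarrow> \<tau> < t \<Longrightarrow> ww \<tau> > 0"
  unfolding ww_def using xi_nonneg[of \<tau>] uu_pos[of \<tau>] c_pos
  by (intro divide_pos_pos) (auto intro!: add_nonneg_pos)

lemma Fd_eq: assumes "\<tau> < t"
  shows "Fd \<tau> = xi \<tau> * exp (-(xi \<tau>^2) / (4 * uu \<tau>)) / (2 * sqrt pi * uu \<tau> * sqrt (uu \<tau>))"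
  using uu_pos[OF assms] unfolding Fd_def
  by (simp add: dGamma1_eq Gamma1_eq field_simps)

lemma Fd_t: "Fd t = 0" unfolding Fd_def uu_def by (simp add: dGamma1_zero)

lemma Fd_nonneg: assumes "0 \<le> \<tau>" "\<tau> \<le> t" shows "Fd \<tau> \<ge> 0"
proof (cases "\<tau> = t")
  case True then show ?thesis by (simp add: Fd_t)
next
  case False
  then have "\<tau> < t" using assms by simp
  then show ?thesis using Fd_eq[of \<tau>] uu_pos[of \<tau>] xi_nonneg[OF assms(1)]
    by simp
qed

lemma ident: assumes "\<tau> < t"
  shows "exp ((a + t / \<delta>) * c) * exp (-(ww \<tau>^2)) = exp (-(xi \<tau>^2) / (4 * uu \<tau>))"
proof -
  have u: "uu \<tau> > 0" by (rule uu_pos[OF assms])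
  have s: "sqrt (uu \<tau>)^2 = uu \<tau>" using u by simp
  have b: "a + t / \<delta> = xi \<tau> + c * uu \<tau>" using eps del
    by (simp add: xi_def c_def uu_def field_simps)
  have "(a + t / \<delta>) * c - ww \<tau>^2 = -(xi \<tau>^2) / (4 * uu \<tau>)"
    unfolding b ww_def using u s
    by (simp add: power_divide power_mult_distrib field_simps) (simp add: power2_eq_square algebra_simps)
  then show ?thesis by (simp flip: exp_add)
qed


lemma ww_deriv: assumes "\<tau> < t"
  shows "(ww has_real_derivative xi \<tau> / (4 * \<epsilon> * uu \<tau> * sqrt (uu \<tau>))) (at \<tau>)"
proof -
  have u: "uu \<tau> > 0" by (rule uu_pos[OF assms])
  have s: "sqrt (uu \<tau>) * sqrt (uu \<tau>) = uu \<tau>" using u by simp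
  have "((\<lambda>\<tau>. (a + \<tau> / \<delta> + 2 * c * ((t - \<tau>) / \<epsilon>)) / (2 * sqrt ((t - \<tau>) / \<epsilon>))) has_real_derivative
     ((1/\<delta> - 2 * c / \<epsilon>) * (2 * sqrt (uu \<tau>)) - (xi \<tau> + 2 * c * uu \<tau>) * (2 * (inverse (sqrt (uu \<tau>)) / 2 * (-1/\<epsilon>))))
       / (2 * sqrt (uu \<tau>))^2) (at \<tau>)"
    using u eps del unfolding uu_def xi_def
    by (auto intro!: derivative_eq_intros simp: power2_eq_square)
  moreover have "((1/\<delta> - 2 * c / \<epsilon>) * (2 * sqrt (uu \<tau>)) - (xi \<tau> + 2 * c * uu \<tau>) * (2 * (inverse (sqrt (uu \<tau>)) / 2 * (-1/\<epsilon>))))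
       / (2 * sqrt (uu \<tau>))^2 = xi \<tau> / (4 * \<epsilon> * uu \<tau> * sqrt (uu \<tau>))"
    using u eps del s unfolding c_def
    by (simp add: field_simps power2_eq_square)
  ultimately show ?thesis unfolding ww_def[abs_def] uu_def xi_def by simp
qed


lemma Phi_deriv: assumes "0 \<le> \<tau>" "\<tau> < t"
  shows "(Phi K has_real_derivative Kf K \<tau> * Fd \<tau>) (at \<tau>)"
proof -
  have u: "uu \<tau> > 0" by (rule uu_pos[OF assms(2)])
  have w: "ww \<tau> > 0" by (rule ww_pos[OF assms])
  let ?E = "exp ((a + t / \<delta>) * c)"
  have d1: "((\<lambda>\<tau>. - \<epsilon> * K * ?E * Gt (ww \<tau>)) has_real_derivative
     - \<epsilon> * K * ?E * ((-exp (-(ww \<tau>^2)) * (2*ww \<tau>^2 + 2*ww \<tau> + 1) / (1+ww \<tau>)^2)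
        * (xi \<tau> / (4 * \<epsilon> * uu \<tau> * sqrt (uu \<tau>))))) (at \<tau>)"
    by (intro DERIV_cmult DERIV_chain2[OF Gt_deriv ww_deriv[OF assms(2)]]) (use w in simp)
  have "- \<epsilon> * K * ?E * ((-exp (-(ww \<tau>^2)) * (2*ww \<tau>^2 + 2*ww \<tau> + 1) / (1+ww \<tau>)^2)
        * (xi \<tau> / (4 * \<epsilon> * uu \<tau> * sqrt (uu \<tau>))))
     = K * (?E * exp (-(ww \<tau>^2))) * (2*ww \<tau>^2 + 2*ww \<tau> + 1) * xi \<tau> / ((1+ww \<tau>)^2 * 4 * uu \<tau> * sqrt (uu \<tau>))"
    by (rule alg1) (use eps u w in auto)
  also have "\<dots> = Kf K \<tau> * Fd \<tau>"
    unfolding ident[OF assms(2)] Fd_eq[OF assms(2)] Kf_def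
    by (rule alg2) (use u w in auto)
  finally have d2: "((\<lambda>\<tau>. - \<epsilon> * K * ?E * Gt (ww \<tau>)) has_real_derivative Kf K \<tau> * Fd \<tau>) (at \<tau>)"
    using d1 by simp
  show ?thesis
    by (rule has_field_derivative_transform_within_open[OF d2, of "{..<t}"])
       (use assms in \<open>auto simp: Phi_def\<close>)
qed

lemma Phi_cont: assumes K: "K > 0" shows "continuous_on {0..t} (Phi K)"
proof -
  let ?E = "exp ((a + t / \<delta>) * c)"
  define g where "g \<tau> = \<epsilon> * K * ?E * (2 * sqrt (uu \<tau>) / (2 * sqrt (uu \<tau>) + xi \<tau> + 2 * c * uu \<tau>))" for \<tau>
  have xt: "xi t > 0" using a0 t0 del by (simp add: xi_def add_nonneg_pos)
  have gt: "g t = 0" by (simp add: g_def uu_def)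
  have den: "2 * sqrt ((t - t) / \<epsilon>) + (a + t / \<delta>) + 2 * c * ((t - t) / \<epsilon>) \<noteq> 0"
    using xt by (simp add: xi_def)
  have "isCont g t"
    unfolding g_def uu_def xi_def
    using eps del by (intro continuous_intros den) auto
  then have gl: "(g \<longlongrightarrow> 0) (at t within {0..t})"
    using gt by (metis isCont_def tendsto_within_subset subset_UNIV)
  have ev: "eventually (\<lambda>\<tau>. norm (Phi K \<tau>) \<le> g \<tau>) (at t within {0..t})"
    unfolding eventually_at_filter
  proof (intro always_eventually allI impI)
    fix \<tau> assume h: "\<tau> \<noteq> t" "\<tau> \<in> {0..t}"
    then have lt: "\<tau> < t" "0 \<le> \<tau>" by auto
    have u: "uu \<tau> > 0" by (rule uu_pos[OF lt(1)])
    have w: "ww \<tau> > 0" by (rule ww_pos[OF lt(2) lt(1)])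
    have "Phi K \<tau> = - (\<epsilon> * K * ?E * (exp (-(ww \<tau>^2)) / (1 + ww \<tau>)))"
      using lt by (simp add: Phi_def Gt_def)
    moreover have "\<epsilon> * K * ?E * (exp (-(ww \<tau>^2)) / (1 + ww \<tau>)) \<ge> 0"
      using eps K w by simp
    ultimately have "norm (Phi K \<tau>) = \<epsilon> * K * ?E * (exp (-(ww \<tau>^2)) / (1 + ww \<tau>))"
      by (metis abs_minus_cancel abs_of_nonneg real_norm_def)
    also have "\<dots> \<le> \<epsilon> * K * ?E * (1 / (1 + ww \<tau>))"
      using eps K w by (intro mult_left_mono divide_right_mono) auto
    also have "1 / (1 + ww \<tau>) = 2 * sqrt (uu \<tau>) / (2 * sqrt (uu \<tau>) + xi \<tau> + 2 * c * uu \<tau>)"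
      unfolding ww_def by (rule alg3) (use u xi_nonneg[OF lt(2)] c_pos in auto)
    finally show "norm (Phi K \<tau>) \<le> g \<tau>" by (simp add: g_def)
  qed
  have ct: "continuous (at t within {0..t}) (Phi K)"
  proof -
    have "Phi K t = 0" by (simp add: Phi_def)
    then show ?thesis unfolding continuous_within using Lim_null_comparison[OF ev gl] by simp
  qed
  show ?thesis
  proof (clarsimp simp: continuous_on_eq_continuous_within)
    fix x assume x: "0 \<le> x" "x \<le> t"
    show "continuous (at x within {0..t}) (Phi K)"
    proof (cases "x = t")
      case True then show ?thesis using ct by simp
    next
      case False
      then have "x < t" using x by simp
      then show ?thesis using Phi_deriv[OF x(1)]
        by (meson DERIV_isCont continuous_at_imp_continuous_at_within)
    qed
  qed
qed

lemma Dd_integral: assumes K: "K > 0"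
  shows "(Dd K has_integral (\<epsilon> * K * exp (-(\<epsilon> * a^2) / (4 * t)) / (1 + ww 0))) {0..t}"
proof -
  have "(Dd K has_integral (Phi K t - Phi K 0)) {0..t}"
  proof (rule fundamental_theorem_of_calculus_interior)
    show "0 \<le> t" using t0 by simp
    show "continuous_on {0..t} (Phi K)" by (rule Phi_cont[OF K])
    fix x assume "x \<in> {0<..<t}"
    then have x: "0 \<le> x" "x < t" by auto
    show "(Phi K has_vector_derivative Dd K x) (at x)"
      using Phi_deriv[OF x] x by (simp add: Dd_def has_real_derivative_iff_has_vector_derivative)
  qed
  moreover have "Phi K t - Phi K 0 = \<epsilon> * K * exp (-(\<epsilon> * a^2) / (4 * t)) / (1 + ww 0)"
  proof -
    have e1: "-(xi 0^2) / (4 * uu 0) = -(\<epsilon> * a^2) / (4 * t)"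
      using t0 eps by (simp add: xi_def uu_def)
    have "exp ((a + t / \<delta>) * c) * exp (-(ww 0^2)) = exp (-(\<epsilon> * a^2) / (4 * t))"
      using ident[of 0] t0 unfolding e1 by simp
    moreover have "Phi K t - Phi K 0 = \<epsilon> * K * (exp ((a + t / \<delta>) * c) * exp (-(ww 0^2))) / (1 + ww 0)"
      using t0 by (simp add: Phi_def Gt_def)
    ultimately show ?thesis by simp
  qed
  ultimately show ?thesis by simp
qed


lemma Kf3: assumes "0 \<le> \<tau>" "\<tau> < t" shows "Kf 3 \<tau> \<ge> 1"
proof -
  have w: "ww \<tau> > 0" by (rule ww_pos[OF assms])
  have P: "2 * ww \<tau>^2 + 2 * ww \<tau> + 1 \<ge> (1 + ww \<tau>)^2 / 2" using w by (simp add: power2_eq_square field_simps)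
  have "2 * (1 + ww \<tau>)^2 \<le> 3 * sqrt pi * ((1 + ww \<tau>)^2 / 2)"
    using mult_right_mono[OF sqrt_pi_bounds(1), of "3 * (1 + ww \<tau>)^2 / 2"] by (simp add: field_simps)
  also have "\<dots> \<le> 3 * sqrt pi * (2 * ww \<tau>^2 + 2 * ww \<tau> + 1)"
    using P by (intro mult_left_mono) auto
  finally show ?thesis using w unfolding Kf_def by (simp add: field_simps)
qed

lemma Kf_half: assumes "0 \<le> \<tau>" "\<tau> < t" shows "Kf (1/2) \<tau> \<le> 1"
proof -
  have w: "ww \<tau> > 0" by (rule ww_pos[OF assms])
  have P: "2 * ww \<tau>^2 + 2 * ww \<tau> + 1 \<le> 2 * (1 + ww \<tau>)^2" using w by (simp add: power2_eq_square field_simps)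
  have "sqrt pi * (2 * ww \<tau>^2 + 2 * ww \<tau> + 1) \<le> 2 * (2 * (1 + ww \<tau>)^2)"
    using P sqrt_pi_bounds(2) w by (intro mult_mono) auto
  then show ?thesis using w unfolding Kf_def by (simp add: field_simps)
qed

lemma Fd_cont: "continuous_on {0..<t} Fd"
proof -
  have "continuous_on {0..<t} (\<lambda>\<tau>. xi \<tau> * exp (-(xi \<tau>^2) / (4 * uu \<tau>)) / (2 * sqrt pi * uu \<tau> * sqrt (uu \<tau>)))"
    unfolding xi_def uu_def using eps del
    by (intro continuous_intros) (auto simp: field_simps)
  then show ?thesis by (rule continuous_on_cong[THEN iffD1, rotated 2]) (auto simp: Fd_eq)
qed

lemma spike_t: "negligible ({0..t} - {0..<t} \<union> ({0..<t} - {0..t}))"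
proof -
  have "{0..t} - {0..<t} \<union> ({0..<t} - {0..t}) \<subseteq> {t}" by auto
  then show ?thesis by (rule negligible_subset[OF negligible_sing])
qed

lemma weighted_int:
  assumes h: "continuous_on {0..<t} h" and M: "\<And>\<tau>. \<tau> \<in> {0..t} \<Longrightarrow> \<bar>h \<tau>\<bar> \<le> M"
  shows "(\<lambda>\<tau>. h \<tau> * Fd \<tau>) integrable_on {0..t}"
proof -
  have M0: "M \<ge> 0" using M[of 0] t0 by auto
  have "Dd 3 integrable_on {0..t}" using Dd_integral[of 3] by (simp add: has_integral_integrable)
  then have "(\<lambda>\<tau>. M * Dd 3 \<tau>) integrable_on {0..t}" using integrable_on_cmult_left[of "Dd 3" "{0..t}" M] by simp
  then have g: "(\<lambda>\<tau>. M * Dd 3 \<tau>) integrable_on {0..<t}" using integrable_spike_set_eq[OF spike_t] by blast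
  have "(\<lambda>\<tau>. h \<tau> * Fd \<tau>) integrable_on {0..<t}"
  proof (rule measurable_bounded_by_integrable_imp_integrable_real[OF _ g])
    show "(\<lambda>\<tau>. h \<tau> * Fd \<tau>) \<in> borel_measurable (lebesgue_on {0..<t})"
      by (intro continuous_imp_measurable_on_sets_lebesgue continuous_intros h Fd_cont) auto
    show "{0..<t} \<in> sets lebesgue" by simp
    fix \<tau> assume x: "\<tau> \<in> {0..<t}"
    then have x2: "0 \<le> \<tau>" "\<tau> < t" by auto
    have F0: "Fd \<tau> \<ge> 0" using Fd_nonneg x2 by auto
    have "\<bar>h \<tau> * Fd \<tau>\<bar> = \<bar>h \<tau>\<bar> * Fd \<tau>" using F0 by (simp add: abs_mult)
    also have "\<dots> \<le> M * Fd \<tau>" using M x F0 by (intro mult_right_mono) auto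
    also have "\<dots> \<le> M * (Kf 3 \<tau> * Fd \<tau>)"
      using mult_right_mono[OF Kf3[OF x2] F0] M0 by (intro mult_left_mono) auto
    finally show "\<bar>h \<tau> * Fd \<tau>\<bar> \<le> M * Dd 3 \<tau>" using x2 by (simp add: Dd_def)
  qed
  then show ?thesis using integrable_spike_set_eq[OF spike_t] by blast
qed

lemma Fd_int: "Fd integrable_on {0..t}"
  using weighted_int[of "\<lambda>_. 1" 1] by simp

lemma Fd_upper: "integral {0..t} Fd \<le> 3 * \<epsilon> * exp (-(\<epsilon> * a^2) / (4 * t)) / (1 + ww 0)"
proof -
  have "integral {0..t} Fd \<le> integral {0..t} (Dd 3)"
  proof (rule integral_le[OF Fd_int])
    show "Dd 3 integrable_on {0..t}" using Dd_integral[of 3] by (simp add: has_integral_integrable)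
    fix \<tau> assume x: "\<tau> \<in> {0..t}"
    show "Fd \<tau> \<le> Dd 3 \<tau>"
    proof (cases "\<tau> = t")
      case True then show ?thesis by (simp add: Dd_def Fd_t)
    next
      case False then have x2: "0 \<le> \<tau>" "\<tau> < t" using x by auto
      have F0: "Fd \<tau> \<ge> 0" using Fd_nonneg x2 by auto
      show ?thesis using mult_right_mono[OF Kf3[OF x2] F0] x2 by (simp add: Dd_def)
    qed
  qed
  also have "\<dots> = 3 * \<epsilon> * exp (-(\<epsilon> * a^2) / (4 * t)) / (1 + ww 0)"
    using Dd_integral[of 3] by (simp add: integral_unique)
  finally show ?thesis .
qed

lemma Fd_lower: "\<epsilon> / 2 * exp (-(\<epsilon> * a^2) / (4 * t)) / (1 + ww 0) \<le> integral {0..t} Fd"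
proof -
  have "integral {0..t} (Dd (1/2)) \<le> integral {0..t} Fd"
  proof (rule integral_le[OF _ Fd_int])
    show "Dd (1/2) integrable_on {0..t}" using Dd_integral[of "1/2"] by (simp add: has_integral_integrable)
    fix \<tau> assume x: "\<tau> \<in> {0..t}"
    show "Dd (1/2) \<tau> \<le> Fd \<tau>"
    proof (cases "\<tau> = t")
      case True then show ?thesis by (simp add: Dd_def Fd_t)
    next
      case False then have x2: "0 \<le> \<tau>" "\<tau> < t" using x by auto
      have F0: "Fd \<tau> \<ge> 0" using Fd_nonneg x2 by auto
      show ?thesis using mult_right_mono[OF Kf_half[OF x2] F0] x2 by (simp add: Dd_def)
    qed
  qed
  moreover have "integral {0..t} (Dd (1/2)) = \<epsilon> / 2 * exp (-(\<epsilon> * a^2) / (4 * t)) / (1 + ww 0)"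
    using Dd_integral[of "1/2"] by (simp add: integral_unique)
  ultimately show ?thesis by simp
qed

end

lemma Gd_mono: fixes s1 s2 \<rho> :: real
  assumes "0 < s1" "s1 \<le> s2" "s2 \<le> \<rho> * s1"
  shows "Gamma_d d r s1 \<le> \<rho> powr (real d / 2) * Gamma_d d r s2"
proof -
  let ?e = "real d / 2"
  have "0 < \<rho> * s1" using assms by linarith
  then have r: "\<rho> > 0" using assms(1) by (simp add: zero_less_mult_iff)
  have A: "(4 * pi * s1) powr ?e > 0" "(4 * pi * s2) powr ?e > 0" using assms by auto
  have "(4 * pi * s2) powr ?e \<le> (4 * pi * (\<rho> * s1)) powr ?e"
    using assms by (intro powr_mono2) auto
  also have "\<dots> = \<rho> powr ?e * (4 * pi * s1) powr ?e"
    using assms r by (simp add: powr_mult[symmetric] mult_ac)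
  finally have B: "(4 * pi * s2) powr ?e \<le> \<rho> powr ?e * (4 * pi * s1) powr ?e" .
  have p1: "(4 * pi * s1) powr (- real d / 2) \<le> \<rho> powr ?e * (4 * pi * s2) powr (- real d / 2)"
  proof -
    have "(4 * pi * s1) powr (- real d / 2) = 1 / (4 * pi * s1) powr ?e"
      by (simp add: powr_minus_divide)
    moreover have "(4 * pi * s2) powr (- real d / 2) = 1 / (4 * pi * s2) powr ?e"
      by (simp add: powr_minus_divide)
    moreover have "1 / (4 * pi * s1) powr ?e \<le> \<rho> powr ?e * (1 / (4 * pi * s2) powr ?e)"
      using A B by (simp add: field_simps)
    ultimately show ?thesis by simp
  qed
  have p2: "exp (- (r^2) / (4 * s1)) \<le> exp (- (r^2) / (4 * s2))"
    using assms by (simp add: divide_left_mono frac_le)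
  have "Gamma_d d r s1 = (4 * pi * s1) powr (- real d / 2) * exp (- (r^2) / (4 * s1))"
    by (simp add: Gamma_d_def)
  also have "\<dots> \<le> (\<rho> powr ?e * (4 * pi * s2) powr (- real d / 2)) * exp (- (r^2) / (4 * s2))"
    using p1 p2 by (intro mult_mono) auto
  finally show ?thesis by (simp add: Gamma_d_def mult_ac)
qed


lemma E_up_pqr:
  fixes \<epsilon> \<delta> p q r G :: real
  assumes eps: "\<epsilon> > 0" and del: "\<delta> > 0" and p: "p > 0" and q: "q \<ge> 0" and r: "r = \<epsilon> * p / \<delta>"
    and G: "G \<ge> exp (-(q^2)) / (4 * p)"
  shows "exp (-(q^2)) / (1 + q + r) \<le> (2 + 4 * \<delta> / \<epsilon>) *
     (if q^2 < 3/2 then (if r^2 < 12 then 1 else G) else (if p * (2 * q + r) < \<delta> / \<epsilon> then p * (2 * q + r) * G else G))"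
proof -
  define X where "X = exp (-(q^2))"
  define W where "W = 1 + q + r"
  define Mu where "Mu = 2 + 4 * \<delta> / \<epsilon>"
  have X: "X > 0" "X \<le> 1" by (auto simp: X_def)
  have r0: "r > 0" using r eps del p by simp
  have W: "W \<ge> 1" "W > 0" using q r0 by (auto simp: W_def)
  have Mu: "Mu \<ge> 2" "Mu \<ge> 4 * \<delta> / \<epsilon>" using eps del by (auto simp: Mu_def)
  have XW: "X / W \<le> 1" using X W by simp
  have caseG: "X / W \<le> Mu * G"
  proof -
    have "4 * p = 4 * \<delta> / \<epsilon> * r" using r eps del by (simp add: field_simps)
    also have "\<dots> \<le> Mu * W" using Mu W q r0 eps del
      by (intro mult_mono) (auto simp: W_def)
    finally have h: "4 * p \<le> Mu * W" .
    have "X / W \<le> Mu * (X / (4 * p))"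
      using h X W p by (simp add: field_simps mult_left_mono)
    also have "\<dots> \<le> Mu * G" using G Mu by (intro mult_left_mono) (auto simp: X_def)
    finally show ?thesis .
  qed
  have caseD3: "q^2 \<ge> 3/2 \<Longrightarrow> X / W \<le> Mu * (p * (2 * q + r) * G)"
  proof -
    assume q2: "q^2 \<ge> 3/2"
    have "(2 * q + r) * W \<ge> 2 * q * q" using q r0 unfolding W_def
      by (intro mult_mono) auto
    then have h1: "(2 * q + r) * W \<ge> 3" using q2 by (simp add: power2_eq_square)
    have "4 \<le> Mu * ((2 * q + r) * W)"
      using mult_mono[OF Mu(1) h1] Mu(1) by simp
    then have h2: "4 * X \<le> Mu * ((2 * q + r) * W) * X" using X by simp
    have "X \<le> Mu * ((2 * q + r) * X / 4) * W" using h2 by (simp add: algebra_simps)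
    then have "X / W \<le> Mu * ((2 * q + r) * X / 4)"
      using W by (simp add: pos_divide_le_eq)
    also have "(2 * q + r) * X / 4 = p * (2 * q + r) * (X / (4 * p))" using p by simp
    also have "Mu * (p * (2 * q + r) * (X / (4 * p))) \<le> Mu * (p * (2 * q + r) * G)"
      using G Mu p q r0 by (intro mult_left_mono) (auto simp: X_def)
    finally show ?thesis .
  qed
  have c1: "X / W \<le> Mu * 1" using XW Mu(1) by linarith
  have "X / W \<le> Mu *
     (if q^2 < 3/2 then (if r^2 < 12 then 1 else G) else (if p * (2 * q + r) < \<delta> / \<epsilon> then p * (2 * q + r) * G else G))"
    using c1 caseG caseD3 by (simp split: if_split)
  then show ?thesis by (simp only: X_def W_def Mu_def)
qed

lemma exp_sq_bounds: fixes q :: real assumes "q \<ge> 0"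
  shows "(1 + q) * exp (-(q^2)) \<le> 2" "(q + q^2) * exp (-(q^2)) \<le> 2"
proof -
  have e: "1 + q^2 \<le> exp (q^2)" by (rule exp_ge_add_one_self)
  have "0 \<le> (q - 1)^2" by simp
  then have "2 * q \<le> 1 + q^2" by (simp add: power2_eq_square algebra_simps)
  then have "q \<le> 1 + q^2" using assms by linarith
  moreover have "0 \<le> q^2" by simp
  ultimately have h1: "1 + q \<le> 2 * exp (q^2)" "q + q^2 \<le> 2 * exp (q^2)" using e assms by linarith+
  have ee: "exp (-(q^2)) * exp (q^2) = 1" by (simp add: exp_minus)
  have "(1 + q) * exp (-(q^2)) \<le> 2 * exp (q^2) * exp (-(q^2))"
    by (rule mult_right_mono[OF h1(1)]) simp
  also have "2 * exp (q^2) * exp (-(q^2)) = 2" by (simp add: exp_minus)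
  finally show "(1 + q) * exp (-(q^2)) \<le> 2" .
  have "(q + q^2) * exp (-(q^2)) \<le> 2 * exp (q^2) * exp (-(q^2))"
    by (rule mult_right_mono[OF h1(2)]) simp
  also have "2 * exp (q^2) * exp (-(q^2)) = 2" by (simp add: exp_minus)
  finally show "(q + q^2) * exp (-(q^2)) \<le> 2" .
qed


lemma sq_ge_imp: fixes y b :: real assumes "y \<ge> 0" "b \<ge> 0" "y^2 \<ge> b^2" shows "y \<ge> b"
  using assms by (meson power2_le_imp_le)

lemma sq_lt_imp: fixes y b :: real assumes "b \<ge> 0" "y^2 < b^2" shows "y < b"
  using assms by (metis abs_le_square_iff abs_of_nonneg not_less power2_less_imp_less le_less_trans abs_ge_self)

lemma E_low_pqr:
  fixes \<epsilon> \<delta> p q r G :: real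
  assumes eps: "\<epsilon> > 0" and del: "\<delta> > 0" and p: "p > 0" and q: "q \<ge> 0" and r: "r = \<epsilon> * p / \<delta>"
    and G0: "G \<ge> 0" and G: "G \<le> exp (-(q^2)) * exp (-(q^2)) / p"
  shows "(if q^2 < 3/2 then (if r^2 < 12 then 1 else G) else (if p * (2 * q + r) < \<delta> / \<epsilon> then p * (2 * q + r) * G else G))
     \<le> (63 + 9 * \<epsilon> / \<delta>) * (exp (-(q^2)) / (1 + q + r))"
proof -
  define X where "X = exp (-(q^2))"
  define W where "W = 1 + q + r"
  define Ml where "Ml = 63 + 9 * \<epsilon> / \<delta>"
  have X: "X > 0" "X \<le> 1" by (auto simp: X_def)
  have r0: "r > 0" using r eps del p by simp
  have W: "W \<ge> 1" "W > 0" using q r0 by (auto simp: W_def)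
  have Ml: "Ml \<ge> 63" "Ml \<ge> 9 * \<epsilon> / \<delta>" using eps del by (auto simp: Ml_def)
  have Xe: "X * exp (q^2) = 1" by (simp add: X_def exp_minus)
  have Xq: "(1 + q^2) * X \<le> 1"
  proof -
    have "(1 + q^2) * X \<le> exp (q^2) * X" using X by (intro mult_right_mono) auto
    then show ?thesis using Xe by (simp add: mult.commute)
  qed
  have b1: "(1 + q) * X \<le> 2" "(q + q^2) * X \<le> 2" using exp_sq_bounds[OF q] by (auto simp: X_def)
  have GX: "G \<le> X / p"
  proof -
    have "X * X / p \<le> X / p" using X p by (simp add: divide_right_mono mult_left_le)
    then show ?thesis using G by (simp add: X_def)
  qed
  have D1: "q^2 < 3/2 \<Longrightarrow> r^2 < 12 \<Longrightarrow> 1 \<le> Ml * (X / W)"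
  proof -
    assume q2: "q^2 < 3/2" and r2: "r^2 < 12"
    have "q < 2" by (rule sq_lt_imp) (use q2 in auto)
    moreover have "r < 4" by (rule sq_lt_imp) (use r2 in auto)
    ultimately have W7: "W \<le> 7" by (simp add: W_def)
    have "exp (q^2) \<le> exp 2" using q2 by simp
    also have "exp 2 = exp 1 * exp (1::real)" by (simp flip: exp_add)
    also have "\<dots> \<le> 3 * 3" using exp_le by (intro mult_mono) auto
    finally have "exp (q^2) \<le> 9" by simp
    then have "X * exp (q^2) \<le> X * 9" using X by (intro mult_left_mono) auto
    then have "1 \<le> 9 * X" using Xe by simp
    then have "W \<le> 63 * X" using W7 by linarith
    also have "\<dots> \<le> Ml * X" using Ml X by (intro mult_right_mono) auto
    finally show ?thesis using W by (simp add: field_simps)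
  qed
  have D2: "q^2 < 3/2 \<Longrightarrow> \<not> r^2 < 12 \<Longrightarrow> G \<le> Ml * (X / W)"
  proof -
    assume q2: "q^2 < 3/2" and r2: "\<not> r^2 < 12"
    have "q < 2" by (rule sq_lt_imp) (use q2 in auto)
    moreover have "r \<ge> 3" by (rule sq_ge_imp) (use r2 r0 in auto)
    ultimately have "W \<le> 2 * r" by (simp add: W_def)
    also have "\<dots> = 2 * \<epsilon> / \<delta> * p" using r by simp
    also have "\<dots> \<le> Ml * p" using Ml p eps del by (intro mult_right_mono) auto
    finally have "W \<le> Ml * p" .
    then have "X / p \<le> Ml * (X / W)" using X W p by (simp add: field_simps mult_left_mono)
    then show ?thesis using GX by linarith
  qed
  have D4: "\<not> q^2 < 3/2 \<Longrightarrow> \<not> p * (2 * q + r) < \<delta> / \<epsilon> \<Longrightarrow> G \<le> Ml * (X / W)"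
  proof -
    assume q2: "\<not> q^2 < 3/2" and R: "\<not> p * (2 * q + r) < \<delta> / \<epsilon>"
    have qp: "q > 0" using q2 q by (cases "q = 0") auto
    have A: "(1 + q) * X \<le> 8 * \<epsilon> / \<delta> * p"
    proof (cases "p * r \<ge> \<delta> / (2 * \<epsilon>)")
      case True
      have "(4 * \<epsilon> / \<delta> * p)^2 = 16 * (\<epsilon> / \<delta>) * (p * (\<epsilon> * p / \<delta>))" by (simp add: power2_eq_square)
      also have "\<dots> \<ge> 16 * (\<epsilon> / \<delta>) * (\<delta> / (2 * \<epsilon>))" using True r eps del by (intro mult_left_mono) auto
      finally have "(4 * \<epsilon> / \<delta> * p)^2 \<ge> 1^2" using eps del by simp
      then have "4 * \<epsilon> / \<delta> * p \<ge> 1" by (rule sq_ge_imp[rotated 2]) (use eps del p in auto)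
      then show ?thesis using b1(1) by linarith
    next
      case False
      then have "2 * p * q \<ge> \<delta> / (2 * \<epsilon>)" using R by (simp add: field_simps)
      then have "8 * \<epsilon> / \<delta> * (p * q) \<ge> 2" using eps del by (simp add: field_simps)
      moreover have "q * ((1 + q) * X) = (q + q^2) * X" by (simp add: power2_eq_square algebra_simps)
      moreover have "q * (8 * \<epsilon> / \<delta> * p) = 8 * \<epsilon> / \<delta> * (p * q)" by simp
      ultimately have "q * ((1 + q) * X) \<le> q * (8 * \<epsilon> / \<delta> * p)" using b1(2) by linarith
      then show ?thesis using qp by (meson mult_le_cancel_left_pos)
    qed
    have "r * X \<le> r" using X r0 by (simp add: mult_left_le)
    then have B: "r * X \<le> \<epsilon> / \<delta> * p" using r by simp
    have e1: "X * W = (1 + q) * X + r * X" by (simp add: W_def algebra_simps)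
    have e2: "9 * \<epsilon> / \<delta> * p = 8 * \<epsilon> / \<delta> * p + \<epsilon> / \<delta> * p" by (simp add: field_simps)
    have "X * W \<le> 9 * \<epsilon> / \<delta> * p" unfolding e1 e2 using A B by linarith
    also have "\<dots> \<le> Ml * p" using Ml p by (intro mult_right_mono) auto
    finally have "X * W \<le> Ml * p" .
    then have "X * X / p \<le> Ml * (X / W)" using X W p by (simp add: field_simps mult_left_mono)
    then show ?thesis using G by (simp add: X_def)
  qed
  have D3: "\<not> q^2 < 3/2 \<Longrightarrow> p * (2 * q + r) < \<delta> / \<epsilon> \<Longrightarrow> p * (2 * q + r) * G \<le> Ml * (X / W)"
  proof -
    assume q2: "\<not> q^2 < 3/2" and R: "p * (2 * q + r) < \<delta> / \<epsilon>"
    have "p * r \<le> p * (2 * q + r)" using p q by (intro mult_left_mono) auto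
    then have pr: "p * r < \<delta> / \<epsilon>" using R by linarith
    have "r^2 = (\<epsilon> / \<delta>) * (p * r)" using r by (simp add: power2_eq_square)
    also have "\<dots> < (\<epsilon> / \<delta>) * (\<delta> / \<epsilon>)" using pr eps del by (intro mult_strict_left_mono) auto
    also have "\<dots> = 1" using eps del by simp
    finally have "r^2 < 1^2" by simp
    then have r1: "r < 1" by (rule sq_lt_imp[rotated]) simp
    have "(2 * q + r) * W \<le> (2 * q + 1) * (2 + q)" using r1 r0 q unfolding W_def
      by (intro mult_mono) auto
    also have "\<dots> \<le> 7 * (1 + q^2)"
    proof -
      have "0 \<le> (q - 1)^2" by simp
      then have "2 * q \<le> 1 + q^2" by (simp add: power2_eq_square algebra_simps)
      moreover have "0 \<le> q * q" by simp
      ultimately have "2 * q \<le> 1 + q * q" "0 \<le> q * q" by (simp_all add: power2_eq_square)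
      moreover have "(2 * q + 1) * (2 + q) = 2 * (q * q) + 5 * q + 2" by (simp add: algebra_simps)
      moreover have "7 * (1 + q * q) = 7 + 7 * (q * q)" by simp
      ultimately have "(2 * q + 1) * (2 + q) \<le> 7 * (1 + q * q)" by linarith
      then show ?thesis by (simp add: power2_eq_square)
    qed
    finally have h: "(2 * q + r) * W \<le> 7 * (1 + q^2)" .
    have "(2 * q + r) * W * X \<le> 7 * ((1 + q^2) * X)" using mult_right_mono[OF h, of X] X by simp
    also have "\<dots> \<le> 7" using Xq by simp
    also have "\<dots> \<le> Ml" using Ml by simp
    finally have "(2 * q + r) * W * X \<le> Ml" .
    then have h3: "(2 * q + r) * W * X * X \<le> Ml * X" using mult_right_mono[of _ Ml X] X by simp
    have "(2 * q + r) * X * X = ((2 * q + r) * W * X * X) / W" using W by simp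
    also have "\<dots> \<le> (Ml * X) / W" using h3 W by (intro divide_right_mono) auto
    finally have "(2 * q + r) * X * X \<le> Ml * (X / W)" by simp
    moreover have "p * (2 * q + r) * G \<le> p * (2 * q + r) * (X * X / p)"
      using G p q r0 by (intro mult_left_mono) (auto simp: X_def)
    ultimately show ?thesis using p by simp
  qed
  have "(if q^2 < 3/2 then (if r^2 < 12 then 1 else G) else (if p * (2 * q + r) < \<delta> / \<epsilon> then p * (2 * q + r) * G else G))
     \<le> Ml * (X / W)"
    using D1 D2 D3 D4 by (simp split: if_split)
  then show ?thesis by (simp only: X_def W_def Ml_def)
qed


lemma E_bounds:
  fixes \<epsilon> \<delta> a t :: real
  assumes eps: "\<epsilon> > 0" and del: "\<delta> > 0" and a: "a \<ge> 0" and t: "t > 0"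
  shows "exp (-(\<epsilon> * a^2) / (4 * t)) / (1 + (a + 2 * (\<epsilon> / \<delta>) * (t / \<epsilon>)) / (2 * sqrt (t / \<epsilon>)))
           \<le> (2 + 4 * \<delta> / \<epsilon>) * hup \<epsilon> \<delta> a t"
    and "hlow \<epsilon> \<delta> a t \<le> (63 + 9 * \<epsilon> / \<delta>) *
          (exp (-(\<epsilon> * a^2) / (4 * t)) / (1 + (a + 2 * (\<epsilon> / \<delta>) * (t / \<epsilon>)) / (2 * sqrt (t / \<epsilon>))))"
proof -
  define p where "p = sqrt (t / \<epsilon>)"
  define q where "q = a / (2 * p)"
  define r where "r = \<epsilon> * p / \<delta>"
  have p: "p > 0" using eps t by (simp add: p_def)
  have pp: "p^2 = t / \<epsilon>" using eps t by (simp add: p_def)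
  have tE: "t = \<epsilon> * p^2" using pp eps by simp
  have aE: "a = 2 * p * q" using p by (simp add: q_def)
  have q: "q \<ge> 0" using a p by (simp add: q_def)
  have ex: "-(\<epsilon> * a^2) / (4 * t) = -(q^2)"
    unfolding tE aE using eps p by (simp add: power2_eq_square field_simps)
  have ex2: "-(a^2) / (4 * (t / \<epsilon>)) = -(q^2)"
    unfolding tE aE using eps p by (simp add: power2_eq_square field_simps)
  have ex3: "-(a^2) / (4 * (t / (2 * \<epsilon>))) = -(q^2) + -(q^2)"
    unfolding tE aE using eps p by (simp add: power2_eq_square field_simps)
  have wE: "(a + 2 * (\<epsilon> / \<delta>) * (t / \<epsilon>)) / (2 * sqrt (t / \<epsilon>)) = q + r"
    unfolding p_def[symmetric] unfolding tE aE r_def using eps del p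
    by (simp add: power2_eq_square field_simps)
  have c1: "\<epsilon> * a^2 < 6 * t \<longleftrightarrow> q^2 < 3/2"
  proof -
    have "\<epsilon> * a^2 = t * (4 * q^2)" unfolding tE aE by (simp add: power2_eq_square)
    then show ?thesis using t by (simp add: mult.commute)
  qed
  have c2: "t < 12 * \<delta>^2 / \<epsilon> \<longleftrightarrow> r^2 < 12"
  proof -
    have "r^2 = t * \<epsilon> / \<delta>^2" unfolding tE r_def using eps del by (simp add: power2_eq_square field_simps)
    moreover have "t < 12 * \<delta>^2 / \<epsilon> \<longleftrightarrow> t * \<epsilon> / \<delta>^2 < 12" using eps del by (simp add: field_simps)
    ultimately show ?thesis by simp
  qed
  have c3: "a + t / \<delta> = p * (2 * q + r)"
    unfolding tE aE r_def using del by (simp add: power2_eq_square field_simps)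
  have G1: "Gamma1 a (t / \<epsilon>) \<ge> exp (-(q^2)) / (4 * p)"
  proof -
    have "Gamma1 a (t / \<epsilon>) = exp (-(q^2)) / (2 * sqrt pi * p)"
      using Gamma1_eq[of "t / \<epsilon>" a] eps t ex2 by (simp add: p_def)
    moreover have "2 * sqrt pi * p \<le> 4 * p" using sqrt_pi_bounds(2) p by simp
    moreover have "0 < 2 * sqrt pi * p" using p by simp
    ultimately show ?thesis using divide_left_mono[of "2 * sqrt pi * p" "4 * p" "exp (-(q^2))"] sqrt_pi_bounds(2) by simp
  qed
  have G2: "Gamma1 a (t / (2 * \<epsilon>)) \<le> exp (-(q^2)) * exp (-(q^2)) / p"
       "Gamma1 a (t / (2 * \<epsilon>)) \<ge> 0"
  proof -
    have e: "Gamma1 a (t / (2 * \<epsilon>)) = exp (-(q^2)) * exp (-(q^2)) / (2 * sqrt pi * sqrt (t / (2 * \<epsilon>)))"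
      using Gamma1_eq[of "t / (2 * \<epsilon>)" a] eps t unfolding ex3 exp_add by simp
    have "p / 2 \<le> sqrt (t / (2 * \<epsilon>))"
      by (rule real_le_rsqrt) (use pp eps t in \<open>simp add: power_divide field_simps\<close>)
    moreover have "1 \<le> sqrt pi" using sqrt_pi_bounds(1) by linarith
    ultimately have "2 * (p / 2) \<le> 2 * sqrt pi * sqrt (t / (2 * \<epsilon>))"
      using p by (intro mult_mono) auto
    then have "p \<le> 2 * sqrt pi * sqrt (t / (2 * \<epsilon>))" by simp
    then show "Gamma1 a (t / (2 * \<epsilon>)) \<le> exp (-(q^2)) * exp (-(q^2)) / p"
      unfolding e using p by (intro divide_left_mono) auto
    show "Gamma1 a (t / (2 * \<epsilon>)) \<ge> 0" unfolding e using eps t by simp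
  qed
  have hupE: "hup \<epsilon> \<delta> a t = (if q^2 < 3/2 then (if r^2 < 12 then 1 else Gamma1 a (t / \<epsilon>))
      else (if p * (2 * q + r) < \<delta> / \<epsilon> then p * (2 * q + r) * Gamma1 a (t / \<epsilon>) else Gamma1 a (t / \<epsilon>)))"
    unfolding hup_def c1 c2 c3 by simp
  have hlowE: "hlow \<epsilon> \<delta> a t = (if q^2 < 3/2 then (if r^2 < 12 then 1 else Gamma1 a (t / (2 * \<epsilon>)))
      else (if p * (2 * q + r) < \<delta> / \<epsilon> then p * (2 * q + r) * Gamma1 a (t / (2 * \<epsilon>)) else Gamma1 a (t / (2 * \<epsilon>))))"
    unfolding hlow_def c1 c2 c3 by simp
  show "exp (-(\<epsilon> * a^2) / (4 * t)) / (1 + (a + 2 * (\<epsilon> / \<delta>) * (t / \<epsilon>)) / (2 * sqrt (t / \<epsilon>)))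
           \<le> (2 + 4 * \<delta> / \<epsilon>) * hup \<epsilon> \<delta> a t"
    unfolding ex wE hupE add.assoc[symmetric]
    by (rule E_up_pqr[OF eps del p q r_def G1])
  show "hlow \<epsilon> \<delta> a t \<le> (63 + 9 * \<epsilon> / \<delta>) *
          (exp (-(\<epsilon> * a^2) / (4 * t)) / (1 + (a + 2 * (\<epsilon> / \<delta>) * (t / \<epsilon>)) / (2 * sqrt (t / \<epsilon>))))"
    unfolding ex wE hlowE add.assoc[symmetric]
    by (rule E_low_pqr[OF eps del p q r_def G2(2) G2(1)])
qed


theorem theorem1p2:
  fixes \<epsilon> \<delta> k :: real
  assumes "\<epsilon> > 0" "\<delta> > 0" "k > 0"
  defines "Lam \<equiv> max \<delta> (k * \<epsilon>)" and "lam \<equiv> min \<delta> (k * \<epsilon>)"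
  shows "\<exists>C>0. \<forall>(x :: (real^'n) \<times> real) (y :: (real^'n) \<times> real) (t :: real).
           snd x \<ge> 0 \<longrightarrow> snd y \<ge> 0 \<longrightarrow> t > 0 \<longrightarrow>
           (1 / C) * hlow \<epsilon> \<delta> (snd x + snd y) t * GammaV (fst x - fst y) (lam / (\<epsilon> * \<delta>) * t)
             \<le> Hker \<epsilon> \<delta> k x y t \<and>
           Hker \<epsilon> \<delta> k x y t
             \<le> C * hup \<epsilon> \<delta> (snd x + snd y) t * GammaV (fst x - fst y) (Lam / (\<epsilon> * \<delta>) * t)"
proof -
  have eps: "\<epsilon> > 0" and del: "\<delta> > 0" and kp: "k > 0" using assms by auto
  define \<rho> where "\<rho> = Lam / lam"
  define e where "e = real CARD('n) / 2"
  define Mu where "Mu = 2 + 4 * \<delta> / \<epsilon>"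
  define Ml where "Ml = 63 + 9 * \<epsilon> / \<delta>"
  define C where "C = 3 * \<epsilon> * \<rho> powr e * Mu + 2 * \<rho> powr e * Ml / \<epsilon> + 1"
  have lam0: "lam > 0" using eps del kp by (simp add: lam_def)
  have Lamlam: "lam \<le> Lam" by (simp add: lam_def Lam_def)
  have rho1: "\<rho> \<ge> 1" using lam0 Lamlam by (simp add: \<rho>_def)
  have rhoe: "\<rho> powr e \<ge> 1" using rho1 by (simp add: e_def ge_one_powr_ge_zero)
  have "4 * \<delta> / \<epsilon> > 0" "9 * \<epsilon> / \<delta> > 0" using eps del by simp_all
  then have Mu0: "Mu > 0" and Ml0: "Ml > 0" by (simp_all add: Mu_def Ml_def)
  have C1: "C \<ge> 3 * \<epsilon> * \<rho> powr e * Mu" "C \<ge> 2 * \<rho> powr e * Ml / \<epsilon>"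
    using eps rhoe Mu0 Ml0 by (auto simp: C_def)
  have C0: "C > 0" using eps rhoe Mu0 Ml0 by (simp add: C_def add_nonneg_pos)
  show ?thesis
  proof (intro exI[of _ C] conjI allI impI C0)
    fix x y :: "(real^'n) \<times> real" and t :: real
    assume sx: "snd x \<ge> 0" and sy: "snd y \<ge> 0" and t0: "t > 0"
    define a where "a = snd x + snd y"
    define z where "z = fst x - fst y"
    have a0: "a \<ge> 0" using sx sy by (simp add: a_def)
    interpret J: J1 \<epsilon> \<delta> a t using eps del a0 t0 by unfold_locales auto
    define \<sigma> where "\<sigma> \<tau> = (t - \<tau>) / \<epsilon> + k / \<delta> * \<tau>" for \<tau>
    define sm where "sm = lam / (\<epsilon> * \<delta>) * t"
    define sM where "sM = Lam / (\<epsilon> * \<delta>) * t"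
    have sm0: "sm > 0" using lam0 eps del t0 by (simp add: sm_def)
    have sMsm: "sM = \<rho> * sm" using lam0 by (simp add: sM_def sm_def \<rho>_def)
    have sig: "sm \<le> \<sigma> \<tau> \<and> \<sigma> \<tau> \<le> sM" if "\<tau> \<in> {0..t}" for \<tau>
    proof -
      have \<tau>: "0 \<le> \<tau>" "\<tau> \<le> t" using that by auto
      show ?thesis
      proof (cases "\<delta> \<le> k * \<epsilon>")
        case True
        then have "lam = \<delta>" "Lam = k * \<epsilon>" by (auto simp: lam_def Lam_def)
        then have e1: "sm = t / \<epsilon>" "sM = k * t / \<delta>" using eps del by (auto simp: sm_def sM_def field_simps)
        have kk: "1 / \<epsilon> \<le> k / \<delta>" using True eps del by (simp add: field_simps)
        have "t / \<epsilon> = (t - \<tau>) / \<epsilon> + 1 / \<epsilon> * \<tau>" using eps by (simp add: field_simps)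
        also have "\<dots> \<le> \<sigma> \<tau>" unfolding \<sigma>_def using kk \<tau> by (intro add_left_mono mult_right_mono) auto
        finally have l: "sm \<le> \<sigma> \<tau>" using e1 by simp
        have m: "1 / \<epsilon> * (t - \<tau>) \<le> k / \<delta> * (t - \<tau>)" using mult_right_mono[OF kk, of "t - \<tau>"] \<tau> by simp
        have "\<sigma> \<tau> = 1 / \<epsilon> * (t - \<tau>) + k / \<delta> * \<tau>" by (simp add: \<sigma>_def)
        also have "\<dots> \<le> k / \<delta> * (t - \<tau>) + k / \<delta> * \<tau>" using m by simp
        finally have "\<sigma> \<tau> \<le> k / \<delta> * (t - \<tau>) + k / \<delta> * \<tau>" .
        also have "\<dots> = k * t / \<delta>" using del by (simp add: field_simps)
        finally show ?thesis using l e1 by simp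
      next
        case False
        then have "lam = k * \<epsilon>" "Lam = \<delta>" by (auto simp: lam_def Lam_def)
        then have e1: "sm = k * t / \<delta>" "sM = t / \<epsilon>" using eps del by (auto simp: sm_def sM_def field_simps)
        have kk: "k / \<delta> \<le> 1 / \<epsilon>" using False eps del by (simp add: field_simps)
        have "k * t / \<delta> = k / \<delta> * (t - \<tau>) + k / \<delta> * \<tau>" using del by (simp add: field_simps)
        also have "\<dots> \<le> 1 / \<epsilon> * (t - \<tau>) + k / \<delta> * \<tau>" using mult_right_mono[OF kk, of "t - \<tau>"] \<tau> by simp
        also have "\<dots> = \<sigma> \<tau>" by (simp add: \<sigma>_def)
        finally have l: "sm \<le> \<sigma> \<tau>" using e1 by simp
        have "\<sigma> \<tau> \<le> (t - \<tau>) / \<epsilon> + 1 / \<epsilon> * \<tau>" unfolding \<sigma>_def using kk \<tau> by (intro add_left_mono mult_right_mono) auto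
        also have "\<dots> = t / \<epsilon>" using eps by (simp add: field_simps)
        finally show ?thesis using l e1 by simp
      qed
    qed
    define h where "h \<tau> = GammaV z (\<sigma> \<tau>)" for \<tau>
    have hU: "h \<tau> \<le> \<rho> powr e * GammaV z sM" if "\<tau> \<in> {0..t}" for \<tau>
      unfolding h_def GammaV_def e_def
    proof (rule Gd_mono)
      show "0 < \<sigma> \<tau>" using sig[OF that] sm0 by linarith
      show "\<sigma> \<tau> \<le> sM" using sig[OF that] by simp
      show "sM \<le> \<rho> * \<sigma> \<tau>" unfolding sMsm using sig[OF that] rho1 by (intro mult_left_mono) auto
    qed
    have hL: "GammaV z sm \<le> \<rho> powr e * h \<tau>" if "\<tau> \<in> {0..t}" for \<tau>
      unfolding h_def GammaV_def e_def
    proof (rule Gd_mono)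
      show "0 < sm" by (rule sm0)
      show "sm \<le> \<sigma> \<tau>" using sig[OF that] by simp
      show "\<sigma> \<tau> \<le> \<rho> * sm" using sig[OF that] sMsm by simp
    qed
    have h0: "h \<tau> \<ge> 0" for \<tau> by (simp add: h_def GammaV_def Gamma_d_def)
    have hc: "continuous_on {0..<t} h"
    proof -
      have c1: "continuous_on {0<..} (\<lambda>s. Gamma_d CARD('n) (norm z) s)"
        unfolding Gamma_d_def by (intro continuous_intros) auto
      have c2: "continuous_on {0..<t} \<sigma>"
        unfolding \<sigma>_def by (intro continuous_intros) (use eps del in auto)
      have c3: "\<sigma> ` {0..<t} \<subseteq> {0<..}" using sig sm0 by force
      have "continuous_on {0..<t} (\<lambda>\<tau>. Gamma_d CARD('n) (norm z) (\<sigma> \<tau>))"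
        by (rule continuous_on_compose2[OF c1 c2 c3])
      then show ?thesis by (simp add: h_def GammaV_def)
    qed
    have GM0: "GammaV z sM \<ge> 0" by (simp add: GammaV_def Gamma_d_def)
    have Gm0: "GammaV z sm \<ge> 0" by (simp add: GammaV_def Gamma_d_def)
    have hint: "(\<lambda>\<tau>. h \<tau> * J.Fd \<tau>) integrable_on {0..t}"
      by (rule J.weighted_int[OF hc, of "\<rho> powr e * GammaV z sM"]) (use hU h0 in auto)
    have Heq: "Hker \<epsilon> \<delta> k x y t = integral {0..t} (\<lambda>\<tau>. h \<tau> * J.Fd \<tau>)"
    proof -
      have "(\<lambda>\<tau>. h \<tau> * J.Fd \<tau>) = (\<lambda>\<tau>. (-2) *\<^sub>R (GammaV (fst x - fst y) ((t - \<tau>) / \<epsilon> + (k / \<delta>) * \<tau>) *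
            dGamma1 (snd x + snd y + \<tau> / \<delta>) ((t - \<tau>) / \<epsilon>)))"
        unfolding h_def J.Fd_def J.xi_def J.uu_def \<sigma>_def by (simp add: z_def a_def mult_ac)
      then show ?thesis unfolding Hker_def by (simp only: integral_cmul) simp
    qed
    define E0 where "E0 = exp (-(\<epsilon> * a^2) / (4 * t)) / (1 + J.ww 0)"
    have E0eq: "E0 = exp (-(\<epsilon> * a^2) / (4 * t)) / (1 + (a + 2 * (\<epsilon> / \<delta>) * (t / \<epsilon>)) / (2 * sqrt (t / \<epsilon>)))"
      by (simp add: E0_def J.ww_def J.xi_def J.uu_def J.c_def)
    have EU: "E0 \<le> Mu * hup \<epsilon> \<delta> a t" unfolding E0eq Mu_def by (rule E_bounds(1)[OF eps del a0 t0])
    have EL: "hlow \<epsilon> \<delta> a t \<le> Ml * E0" unfolding E0eq Ml_def by (rule E_bounds(2)[OF eps del a0 t0])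
    have E00: "E0 \<ge> 0" using J.ww_pos[of 0] t0 by (simp add: E0_def)
    have hup0: "hup \<epsilon> \<delta> a t \<ge> 0" unfolding hup_def Gamma1_def Gamma_d_def using a0 t0 del by auto
    have Fdint: "J.Fd integrable_on {0..t}" by (rule J.Fd_int)
    have "integral {0..t} (\<lambda>\<tau>. h \<tau> * J.Fd \<tau>) \<le> integral {0..t} (\<lambda>\<tau>. (\<rho> powr e * GammaV z sM) * J.Fd \<tau>)"
    proof (rule integral_le[OF hint])
      show "(\<lambda>\<tau>. (\<rho> powr e * GammaV z sM) * J.Fd \<tau>) integrable_on {0..t}"
        using integrable_on_cmult_left[OF Fdint, of "\<rho> powr e * GammaV z sM"] by simp
      fix \<tau> assume \<tau>: "\<tau> \<in> {0..t}"
      show "h \<tau> * J.Fd \<tau> \<le> (\<rho> powr e * GammaV z sM) * J.Fd \<tau>"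
        using hU[OF \<tau>] J.Fd_nonneg \<tau> by (intro mult_right_mono) auto
    qed
    also have "\<dots> = (\<rho> powr e * GammaV z sM) * integral {0..t} J.Fd"
      using integral_cmul[where c="\<rho> powr e * GammaV z sM" and f=J.Fd and S="{0..t}"] by simp
    also have "\<dots> \<le> (\<rho> powr e * GammaV z sM) * (3 * \<epsilon> * E0)"
      using J.Fd_upper rhoe GM0 by (intro mult_left_mono) (auto simp: E0_def)
    also have "\<dots> = GammaV z sM * (3 * \<epsilon> * \<rho> powr e * E0)" by simp
    also have "\<dots> \<le> GammaV z sM * (3 * \<epsilon> * \<rho> powr e * (Mu * hup \<epsilon> \<delta> a t))"
      using EU GM0 eps rhoe by (intro mult_left_mono) auto
    also have "\<dots> \<le> GammaV z sM * (C * hup \<epsilon> \<delta> a t)"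
    proof (intro mult_left_mono GM0)
      have "(3 * \<epsilon> * \<rho> powr e * Mu) * hup \<epsilon> \<delta> a t \<le> C * hup \<epsilon> \<delta> a t"
        using C1(1) hup0 by (rule mult_right_mono)
      then show "3 * \<epsilon> * \<rho> powr e * (Mu * hup \<epsilon> \<delta> a t) \<le> C * hup \<epsilon> \<delta> a t"
        by (simp add: mult.assoc)
    qed
    finally have U: "integral {0..t} (\<lambda>\<tau>. h \<tau> * J.Fd \<tau>) \<le> C * hup \<epsilon> \<delta> a t * GammaV z sM" by (simp add: mult_ac)
    have "(GammaV z sm / \<rho> powr e) * integral {0..t} J.Fd = integral {0..t} (\<lambda>\<tau>. (GammaV z sm / \<rho> powr e) * J.Fd \<tau>)"
      using integral_cmul[where c="GammaV z sm / \<rho> powr e" and f=J.Fd and S="{0..t}"] by simp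
    also have "\<dots> \<le> integral {0..t} (\<lambda>\<tau>. h \<tau> * J.Fd \<tau>)"
    proof (rule integral_le[OF _ hint])
      show "(\<lambda>\<tau>. GammaV z sm / \<rho> powr e * J.Fd \<tau>) integrable_on {0..t}"
        using integrable_on_cmult_left[OF Fdint, of "GammaV z sm / \<rho> powr e"] by simp
      fix \<tau> assume \<tau>: "\<tau> \<in> {0..t}"
      have "GammaV z sm / \<rho> powr e \<le> h \<tau>" using hL[OF \<tau>] rhoe h0[of \<tau>] by (simp add: divide_le_eq mult.commute)
      then show "GammaV z sm / \<rho> powr e * J.Fd \<tau> \<le> h \<tau> * J.Fd \<tau>"
        using J.Fd_nonneg \<tau> by (intro mult_right_mono) auto
    qed
    finally have L1: "(GammaV z sm / \<rho> powr e) * integral {0..t} J.Fd \<le> integral {0..t} (\<lambda>\<tau>. h \<tau> * J.Fd \<tau>)" .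
    have "(1 / C) * hlow \<epsilon> \<delta> a t * GammaV z sm \<le> (1 / C) * (Ml * E0) * GammaV z sm"
      using EL C0 Gm0 by (intro mult_right_mono mult_left_mono) auto
    also have "\<dots> \<le> (GammaV z sm / \<rho> powr e) * (\<epsilon> / 2 * E0)"
    proof -
      have "Ml / C \<le> \<epsilon> / (2 * \<rho> powr e)"
      proof -
        have rp: "\<rho> powr e > 0" using rhoe by linarith
        have "Ml * (2 * \<rho> powr e) \<le> C * \<epsilon>" using C1(2) eps rp by (simp add: field_simps)
        then show ?thesis using C0 rp by (simp add: field_simps)
      qed
      then have "Ml / C * (E0 * GammaV z sm) \<le> \<epsilon> / (2 * \<rho> powr e) * (E0 * GammaV z sm)"
        using E00 Gm0 by (intro mult_right_mono) auto
      then show ?thesis by (simp add: field_simps)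
    qed
    also have "\<dots> \<le> (GammaV z sm / \<rho> powr e) * integral {0..t} J.Fd"
      using J.Fd_lower Gm0 rhoe by (intro mult_left_mono) (auto simp: E0_def)
    finally have L: "(1 / C) * hlow \<epsilon> \<delta> a t * GammaV z sm \<le> integral {0..t} (\<lambda>\<tau>. h \<tau> * J.Fd \<tau>)"
      using L1 by linarith
    show "(1 / C) * hlow \<epsilon> \<delta> (snd x + snd y) t * GammaV (fst x - fst y) (lam / (\<epsilon> * \<delta>) * t)
             \<le> Hker \<epsilon> \<delta> k x y t"
      using L Heq by (simp add: a_def z_def sm_def)
    show "Hker \<epsilon> \<delta> k x y t
             \<le> C * hup \<epsilon> \<delta> (snd x + snd y) t * GammaV (fst x - fst y) (Lam / (\<epsilon> * \<delta>) * t)"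
      using U Heq by (simp add: a_def z_def sM_def)
  qed
qed

end
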